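(* Let $d\in C^1(\mathbb{R})$ with $d(0)=0$, $d'(m)>d_0$ and $|d'(m)|\le d_1+d_2|m|^p$ for all $m\in\mathbb{R}$, for constants $d_0>0$, $d_1,d_2,p\ge0$. Let $\bar f,\bar g\in L^2(0,1)$, $\bar h=(\bar h(0),\bar h(1))\in\mathbb{R}^2$, $T>0$, and let $(p,m)$ be a smooth solution on $(0,1)\times[0,T]$ of $$\partial_t p+\partial_x m=\bar f,\qquad \partial_t m+\partial_x p+d(m)=\bar g\quad\text{in }(0,1)\times[0,T],\qquad p(x,t)=\bar h(x)\ \text{for }x\in\{0,1\},\ t\in[0,T].$$ Then for all $t\in[0,T]$, $$\|\partial_t p(t)\|_{L^2}+\|\partial_t m(t)\|_{L^2}+\|m(t)\|_{H^1}\le c,$$ where the constant $c$ depends only on $\|\bar f\|_{L^2},\|\bar g\|_{L^2},|\bar h|_1,\|p(0)\|_{H^1},\|m(0)\|_{H^1}$, and not on $t$ or $T$.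
   Context: $p(t)$, $m(t)$ denote the functions $x\mapsto p(x,t)$, $x\mapsto m(x,t)$. $|\bar h|_1=|\bar h(0)|+|\bar h(1)|$. The conditions on $d$ are the paper's standing assumption on the damping function in this system. *)

theory Defs
  imports "HOL-Analysis.Analysis"
begin

text \<open>A function of two real variables (x,t) is smooth (C-infinity) on the set U if it
  belongs to a family of functions closed under taking both partial derivatives, every
  member of which is (Frechet) differentiable at each point of U.\<close>
definition smooth_on2 :: "(real \<times> real) set \<Rightarrow> (real \<Rightarrow> real \<Rightarrow> real) \<Rightarrow> bool" where
  "smooth_on2 U u \<longleftrightarrow>
     (\<exists>F. u \<in> F \<and>
        (\<forall>v\<in>F. \<exists>vx\<in>F. \<exists>vt\<in>F. \<forall>x t. (x, t) \<in> U \<longrightarrow>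
           ((\<lambda>z. v (fst z) (snd z)) has_derivative
              (\<lambda>h. vx x t * fst h + vt x t * snd h)) (at (x, t))))"

definition L2norm :: "(real \<Rightarrow> real) \<Rightarrow> real" where
  "L2norm u = sqrt (LINT x:{0<..<1}|lborel. (u x)\<^sup>2)"

definition H1norm :: "(real \<Rightarrow> real) \<Rightarrow> real" where
  "H1norm u = sqrt ((L2norm u)\<^sup>2 + (L2norm (\<lambda>x. deriv u x))\<^sup>2)"

definition in_L2 :: "(real \<Rightarrow> real) \<Rightarrow> bool" where
  "in_L2 u \<longleftrightarrow> u \<in> borel_measurable lborel \<and> set_integrable lborel {0<..<1} (\<lambda>x. (u x)\<^sup>2)"

end

theory Submission
  imports Defs
begin


definition D2 :: "(real \<times> real) set \<Rightarrow> (real \<Rightarrow> real \<Rightarrow> real) \<Rightarrow> (real \<Rightarrow> real \<Rightarrow> real) \<Rightarrow> (real \<Rightarrow> real \<Rightarrow> real) \<Rightarrow> bool" where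
  "D2 U v vx vt \<longleftrightarrow> (\<forall>x t. (x, t) \<in> U \<longrightarrow>
     ((\<lambda>z. v (fst z) (snd z)) has_derivative (\<lambda>h. vx x t * fst h + vt x t * snd h)) (at (x, t)))"

lemma D2_dx:
  assumes "D2 U v vx vt" "(x, t) \<in> U"
  shows "((\<lambda>y. v y t) has_real_derivative vx x t) (at x within S)"
proof -
  have d: "((\<lambda>z. v (fst z) (snd z)) has_derivative (\<lambda>h. vx x t * fst h + vt x t * snd h)) (at (x, t))"
    using assms unfolding D2_def by blast
  have p: "((\<lambda>y. (y, t)) has_derivative (\<lambda>h. (h, 0))) (at x within S)"
    by (auto intro!: derivative_eq_intros)
  have "((\<lambda>y. v (fst (y, t)) (snd (y, t))) has_derivative (\<lambda>h. vx x t * fst (h, 0::real) + vt x t * snd (h, 0::real))) (at x within S)"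
    using has_derivative_compose[OF p d] by simp
  then show ?thesis
    by (simp add: has_field_derivative_def mult_commute_abs)
qed

lemma D2_dt:
  assumes "D2 U v vx vt" "(x, t) \<in> U"
  shows "((\<lambda>s. v x s) has_real_derivative vt x t) (at t within S)"
proof -
  have d: "((\<lambda>z. v (fst z) (snd z)) has_derivative (\<lambda>h. vx x t * fst h + vt x t * snd h)) (at (x, t))"
    using assms unfolding D2_def by blast
  have p: "((\<lambda>s. (x, s)) has_derivative (\<lambda>h. (0, h))) (at t within S)"
    by (auto intro!: derivative_eq_intros)
  have "((\<lambda>s. v (fst (x, s)) (snd (x, s))) has_derivative (\<lambda>h. vx x t * fst (0::real, h) + vt x t * snd (0::real, h))) (at t within S)"
    using has_derivative_compose[OF p d] by simp
  then show ?thesis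
    by (simp add: has_field_derivative_def mult_commute_abs)
qed

lemma D2_cont:
  assumes "D2 U v vx vt"
  shows "continuous_on U (\<lambda>z. v (fst z) (snd z))"
proof (rule continuous_at_imp_continuous_on, clarify)
  fix x t assume "(x, t) \<in> U"
  then show "isCont (\<lambda>z. v (fst z) (snd z)) (x, t)"
    using assms unfolding D2_def by (blast intro: has_derivative_continuous)
qed

lemma smooth_unpack:
  assumes "smooth_on2 U u"
  obtains F DX DT where "u \<in> F" "\<And>v. v \<in> F \<Longrightarrow> DX v \<in> F \<and> DT v \<in> F \<and> D2 U v (DX v) (DT v)"
proof -
  obtain F where F: "u \<in> F" "\<forall>v\<in>F. \<exists>vx\<in>F. \<exists>vt\<in>F. D2 U v vx vt"
    using assms unfolding smooth_on2_def D2_def by blast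
  then have "\<forall>v\<in>F. \<exists>w. fst w \<in> F \<and> snd w \<in> F \<and> D2 U v (fst w) (snd w)" by force
  then obtain W where "\<forall>v\<in>F. fst (W v) \<in> F \<and> snd (W v) \<in> F \<and> D2 U v (fst (W v)) (snd (W v))"
    by metis
  then show ?thesis using that[of F "\<lambda>v. fst (W v)" "\<lambda>v. snd (W v)"] F by blast
qed

lemma open_box:
  fixes U :: "(real \<times> real) set"
  assumes "open U" "(x, t) \<in> U"
  obtains e where "e > 0" "\<And>a b. \<bar>a - x\<bar> \<le> e \<Longrightarrow> \<bar>b - t\<bar> \<le> e \<Longrightarrow> (a, b) \<in> U"
proof -
  obtain r where r: "r > 0" "ball (x, t) r \<subseteq> U"
    using assms open_contains_ball by blast
  have "(a, b) \<in> U" if "\<bar>a - x\<bar> \<le> r/3" "\<bar>b - t\<bar> \<le> r/3" for a b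
  proof -
    have "dist (x, t) (a, b) = norm (x - a, t - b)" by (simp add: dist_norm)
    also have "\<dots> \<le> norm (x - a) + norm (t - b)" by (rule norm_Pair_le)
    also have "\<dots> < r" using that r by (auto simp: abs_minus_commute)
    finally show ?thesis using r by auto
  qed
  then show ?thesis using that[of "r/3"] r by auto
qed

lemma D2_sym:
  assumes U: "open U" and d1: "D2 U v vx vt" and d2: "D2 U vx vxx vxt" and d3: "D2 U vt vtx vtt"
    and cxt: "continuous_on U (\<lambda>z. vxt (fst z) (snd z))"
    and xt: "(x, t) \<in> U"
  shows "vxt x t = vtx x t"
proof -
  obtain e where e: "e > 0" "\<And>a b. \<bar>a - x\<bar> \<le> e \<Longrightarrow> \<bar>b - t\<bar> \<le> e \<Longrightarrow> (a, b) \<in> U"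
    using open_box[OF U xt] by blast
  define a0 where "a0 = x - e"
  define b0 where "b0 = x + e"
  define J where "J = {t - e<..<t + e}"
  have J: "open J" "convex J" "t \<in> J" using e by (auto simp: J_def)
  have inU: "(r, s) \<in> U" if "r \<in> {a0..b0}" "s \<in> J" for r s
    using that e by (intro e) (auto simp: a0_def b0_def J_def)
  have key: "vt y t - vt a0 t = integral {a0..y} (\<lambda>r. vxt r t)" if y: "y \<in> {a0..b0}" for y
  proof -
    have sub: "{a0..y} \<subseteq> {a0..b0}" using y by auto
    have ftc: "v y s - v a0 s = integral {a0..y} (\<lambda>r. vx r s)" if s: "s \<in> J" for s
    proof -
      have "((\<lambda>r. vx r s) has_integral (v y s - v a0 s)) {a0..y}"
      proof (rule fundamental_theorem_of_calculus)
        show "a0 \<le> y" using y by auto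
        fix r assume "r \<in> {a0..y}"
        then have "(r, s) \<in> U" using inU sub s by auto
        then show "((\<lambda>r. v r s) has_vector_derivative vx r s) (at r within {a0..y})"
          using D2_dx[OF d1] by (simp add: has_real_derivative_iff_has_vector_derivative)
      qed
      then show ?thesis by (simp add: integral_unique)
    qed
    have lb: "((\<lambda>s. integral (cbox a0 y) (\<lambda>r. vx r s)) has_field_derivative
        integral (cbox a0 y) (\<lambda>r. vxt r t)) (at t within J)"
    proof (rule leibniz_rule_field_derivative[where fx="\<lambda>s r. vxt r s"])
      fix s r assume "s \<in> J" "r \<in> cbox a0 y"
      then have "(r, s) \<in> U" using inU sub by auto
      then show "((\<lambda>s. vx r s) has_field_derivative vxt r s) (at s within J)"
        using D2_dt[OF d2] by blast
    next
      fix s assume s: "s \<in> J"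
      have "continuous_on {a0..y} (\<lambda>r. vx r s)"
        by (rule DERIV_continuous_on[where D="\<lambda>r. vxx r s"], rule D2_dx[OF d2], use inU sub s in auto)
      then show "(\<lambda>r. vx r s) integrable_on cbox a0 y"
        by (simp add: integrable_continuous_interval)
    next
      have "continuous_on (J \<times> cbox a0 y) (\<lambda>z. vxt (snd z) (fst z))"
        by (rule continuous_on_compose2[OF cxt, where f="\<lambda>z. (snd z, fst z)", simplified])
           (auto intro!: continuous_intros inU dest: subsetD[OF sub])
      then show "continuous_on (J \<times> cbox a0 y) (\<lambda>(s, r). vxt r s)"
        by (simp add: case_prod_beta')
    qed (use J in auto)
    then have lb': "((\<lambda>s. integral {a0..y} (\<lambda>r. vx r s)) has_field_derivative
        integral {a0..y} (\<lambda>r. vxt r t)) (at t)"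
      using at_within_open[OF J(3,1)] by simp
    have l2: "((\<lambda>s. v y s - v a0 s) has_field_derivative vt y t - vt a0 t) (at t)"
      using inU[OF y J(3)] inU[of a0 t] J(3) e(1)
      by (intro derivative_intros D2_dt[OF d1]) (auto simp: a0_def b0_def)
    have l3: "((\<lambda>s. v y s - v a0 s) has_field_derivative integral {a0..y} (\<lambda>r. vxt r t)) (at t)"
      by (rule has_field_derivative_transform_within_open[OF lb' J(1) J(3)]) (simp add: ftc)
    show ?thesis using DERIV_unique[OF l2 l3] .
  qed
  have x0: "x \<in> {a0..b0}" "a0 < x" "x < b0" using e by (auto simp: a0_def b0_def)
  have cI: "continuous_on {a0..b0} (\<lambda>r. vxt r t)"
    by (rule continuous_on_compose2[OF cxt, where f="\<lambda>r. (r, t)", simplified])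
       (auto intro!: continuous_intros inU J)
  have "((\<lambda>y. integral {a0..y} (\<lambda>r. vxt r t)) has_vector_derivative vxt x t) (at x within {a0..b0})"
    by (rule integral_has_vector_derivative[OF cI x0(1)])
  then have i1: "((\<lambda>y. integral {a0..y} (\<lambda>r. vxt r t)) has_field_derivative vxt x t) (at x)"
    using at_within_Icc_at[OF x0(2,3)] by (simp add: has_real_derivative_iff_has_vector_derivative)
  have i2: "((\<lambda>y. vt y t - vt a0 t) has_field_derivative vtx x t) (at x)"
    using D2_dx[OF d3 xt] by (auto intro!: derivative_eq_intros)
  have i3: "((\<lambda>y. vt y t - vt a0 t) has_field_derivative vxt x t) (at x)"
    by (rule has_field_derivative_transform_within_open[OF i1, of "{a0<..<b0}"])
       (use x0 key in auto)
  show ?thesis using DERIV_unique[OF i3 i2] .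
qed



abbreviation I01 :: "(real \<Rightarrow> real) \<Rightarrow> real" where
  "I01 u \<equiv> (LINT x:{0<..<1}|lborel. u x)"

lemma ae_cont_zero:
  fixes \<phi> :: "real \<Rightarrow> real"
  assumes c: "continuous_on {0<..<1} \<phi>" and ae: "AE x in lborel. x \<in> {0<..<1} \<longrightarrow> \<phi> x = 0"
    and x0: "x0 \<in> {0<..<1}"
  shows "\<phi> x0 = 0"
proof (rule ccontr)
  assume ne: "\<phi> x0 \<noteq> 0"
  have "isCont \<phi> x0" using continuous_on_eq_continuous_at[OF open_greaterThanLessThan] c x0 by blast
  then obtain \<delta> where \<delta>: "\<delta> > 0" "\<And>y. dist x0 y < \<delta> \<Longrightarrow> \<phi> y \<noteq> 0"
    using continuous_at_avoid[of x0 \<phi> 0] ne by blast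
  define a where "a = max 0 (x0 - \<delta>)"
  define b where "b = min 1 (x0 + \<delta>)"
  have x01: "0 < x0" "x0 < 1" using x0 by auto
  have ab: "a < b" unfolding a_def b_def using x01 \<delta>(1) by linarith
  have sub: "x \<in> {0<..<1} \<and> dist x0 x < \<delta>" if "x \<in> {a<..<b}" for x
  proof -
    have "a < x" "x < b" using that by auto
    then have "0 < x" "x0 - \<delta> < x" "x < 1" "x < x0 + \<delta>" unfolding a_def b_def by linarith+
    then show ?thesis by (simp add: dist_real_def abs_less_iff)
  qed
  have "AE x in lborel. x \<notin> {a<..<b}"
    using ae
  proof (rule AE_mp)
    show "AE x in lborel. (x \<in> {0<..<1} \<longrightarrow> \<phi> x = 0) \<longrightarrow> x \<notin> {a<..<b}"
    proof (rule AE_I2, rule impI, rule notI)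
      fix x assume h: "x \<in> {0<..<1} \<longrightarrow> \<phi> x = 0" "x \<in> {a<..<b}"
      then show False using sub[OF h(2)] \<delta>(2) by blast
    qed
  qed
  moreover have "{x \<in> space lborel. \<not> x \<notin> {a<..<b}} = {a<..<b}" by auto
  ultimately have "emeasure lborel {a<..<b} = 0"
    using AE_iff_measurable[of "{a<..<b}" lborel "\<lambda>x. x \<notin> {a<..<b}"] by simp
  then show False using ab by simp
qed

lemma cont_LINT:
  fixes u :: "real \<Rightarrow> real"
  assumes "continuous_on {0..1} u"
  shows "set_integrable lborel {0<..<1} u" "I01 u = integral {0..1} u"
proof -
  have "set_integrable lborel {0..1} u" using borel_integrable_atLeastAtMost'[OF assms] .
  then show si: "set_integrable lborel {0<..<1} u"
    by (rule set_integrable_subset) auto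
  show "I01 u = integral {0..1} u"
    using set_borel_integral_eq_integral(2)[OF si] integral_open_interval_real[of 0 1 u] by simp
qed

lemma I01_mono':
  fixes F G :: "real \<Rightarrow> real"
  assumes "set_integrable lborel {0<..<1} F" "AE x in lborel. x \<in> {0<..<1} \<longrightarrow> G x \<le> F x"
    "\<And>x. x \<in> {0<..<1} \<Longrightarrow> 0 \<le> F x"
  shows "I01 G \<le> I01 F"
  unfolding set_lebesgue_integral_def
proof (rule integral_mono_AE')
  show "integrable lborel (\<lambda>x. indicat_real {0<..<1} x *\<^sub>R F x)"
    using assms(1) unfolding set_integrable_def .
  show "AE x in lborel. indicat_real {0<..<1} x *\<^sub>R G x \<le> indicat_real {0<..<1} x *\<^sub>R F x"
    using assms(2) by eventually_elim (auto simp: indicator_def)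
  show "AE x in lborel. 0 \<le> indicat_real {0<..<1} x *\<^sub>R F x"
    using assms(3) by (auto simp: indicator_def)
qed

lemma I01_nonneg:
  fixes F :: "real \<Rightarrow> real"
  assumes "\<And>x. x \<in> {0<..<1} \<Longrightarrow> 0 \<le> F x"
  shows "0 \<le> I01 F"
  unfolding set_lebesgue_integral_def
  by (rule integral_nonneg_AE) (use assms in \<open>auto simp: indicator_def\<close>)

lemma I01_const: "I01 (\<lambda>_. c) = c"
  by (subst set_integral_const) auto

lemma I01_const_int: "set_integrable lborel {0<..<1::real} (\<lambda>_. c::real)"
  by (rule cont_LINT(1)) (rule continuous_on_const)

lemma L2norm_sq: "(L2norm u)\<^sup>2 = I01 (\<lambda>x. (u x)\<^sup>2)"
  unfolding L2norm_def by (simp add: I01_nonneg)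

lemma H1norm_sq: "(H1norm u)\<^sup>2 = I01 (\<lambda>x. (u x)\<^sup>2) + I01 (\<lambda>x. (deriv u x)\<^sup>2)"
  unfolding H1norm_def by (simp add: L2norm_sq I01_nonneg)

lemma L2_L1:
  assumes "in_L2 f"
  shows "set_integrable lborel {0<..<1} f" "I01 (\<lambda>x. \<bar>f x\<bar>) \<le> 1/2 + 1/2 * (L2norm f)\<^sup>2"
proof -
  have sq: "set_integrable lborel {0<..<1} (\<lambda>x. (f x)\<^sup>2)" and fm: "f \<in> borel_measurable lborel"
    using assms unfolding in_L2_def by auto
  have sq2: "set_integrable lborel {0<..<1} (\<lambda>x. 1/2 * (f x)\<^sup>2)"
    by (rule set_integrable_mult_right) (rule sq)
  have F: "set_integrable lborel {0<..<1} (\<lambda>x. 1/2 + 1/2 * (f x)\<^sup>2)"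
    by (rule set_integral_add(1)[OF I01_const_int sq2])
  have b: "\<bar>y\<bar> \<le> 1/2 + 1/2 * y\<^sup>2" for y :: real
  proof -
    have "0 \<le> (\<bar>y\<bar> - 1)\<^sup>2" by simp
    then show ?thesis unfolding power2_diff power2_abs by simp
  qed
  have mb: "set_borel_measurable lborel {0<..<1} f"
    unfolding set_borel_measurable_def
    by (intro borel_measurable_scaleR borel_measurable_indicator fm) auto
  have ae: "AE x in lborel. x \<in> {0<..<1} \<longrightarrow> norm (f x) \<le> norm (1/2 + 1/2 * (f x)\<^sup>2)"
  proof (rule AE_I2, rule impI)
    fix x
    have "0 \<le> 1/2 + 1/2 * (f x)\<^sup>2" by simp
    then show "norm (f x) \<le> norm (1/2 + 1/2 * (f x)\<^sup>2)" using b[of "f x"] by simp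
  qed
  show si: "set_integrable lborel {0<..<1} f"
    by (rule set_integrable_bound[OF F mb ae])
  have "I01 (\<lambda>x. \<bar>f x\<bar>) \<le> I01 (\<lambda>x. 1/2 + 1/2 * (f x)\<^sup>2)"
    by (rule I01_mono'[OF F], rule AE_I2, rule impI, rule b, simp)
  also have "\<dots> = 1/2 + 1/2 * I01 (\<lambda>x. (f x)\<^sup>2)"
    using set_integral_add(2)[OF I01_const_int sq2] by (simp only: I01_const set_integral_mult_right)
  finally show "I01 (\<lambda>x. \<bar>f x\<bar>) \<le> 1/2 + 1/2 * (L2norm f)\<^sup>2" unfolding L2norm_sq .
qed



lemma d_deriv:
  fixes d :: "real \<Rightarrow> real"
  assumes "d C1_differentiable_on UNIV"
  shows "DERIV d y :> deriv d y"
  using assms unfolding C1_differentiable_on_eq DERIV_deriv_iff_real_differentiable by blast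

lemma d_lower:
  fixes d :: "real \<Rightarrow> real"
  assumes c: "d C1_differentiable_on UNIV" and d0: "d 0 = 0" and dd: "\<forall>y. deriv d y > c0"
  shows "y \<ge> 0 \<Longrightarrow> d y \<ge> c0 * y" "y \<le> 0 \<Longrightarrow> d y \<le> c0 * y"
proof -
  have D: "\<And>x. DERIV d x :> deriv d x" using d_deriv[OF c] .
  show "d y \<ge> c0 * y" if "y \<ge> 0"
  proof (cases "y = 0")
    case True then show ?thesis using d0 by simp
  next
    case False
    then have "0 < y" using that by simp
    then obtain z where "d y - d 0 = (y - 0) * deriv d z" using MVT2[of 0 y d "deriv d"] D by blast
    moreover have "y * c0 < y * deriv d z" using dd \<open>0 < y\<close> by simp
    ultimately show ?thesis using d0 by (simp add: mult.commute)
  qed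
  show "d y \<le> c0 * y" if "y \<le> 0"
  proof (cases "y = 0")
    case True then show ?thesis using d0 by simp
  next
    case False
    then have "y < 0" using that by simp
    then obtain z where "d 0 - d y = (0 - y) * deriv d z" using MVT2[of y 0 d "deriv d"] D by blast
    moreover have "(0 - y) * c0 < (0 - y) * deriv d z" using dd \<open>y < 0\<close> by simp
    ultimately show ?thesis using d0 by (simp add: algebra_simps)
  qed
qed

lemma d_upper:
  fixes d :: "real \<Rightarrow> real"
  assumes c: "d C1_differentiable_on UNIV" and d0: "d 0 = 0" and d1: "d1 \<ge> 0" and d2: "d2 \<ge> 0" and q: "q \<ge> 0"
    and bd: "\<forall>y. y \<noteq> 0 \<longrightarrow> \<bar>deriv d y\<bar> \<le> d1 + d2 * \<bar>y\<bar> powr q"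
    and yS: "\<bar>y\<bar> \<le> S"
  shows "\<bar>d y\<bar> \<le> (d1 + d2 * S powr q) * S"
proof (cases "y = 0")
  case True
  have "0 \<le> d1 + d2 * S powr q" using d1 d2 by simp
  moreover have "0 \<le> S" using yS by linarith
  ultimately show ?thesis using True d0 by simp
next
  case False
  have D: "\<And>x. DERIV d x :> deriv d x" using d_deriv[OF c] .
  obtain z where z: "z \<noteq> 0" "\<bar>z\<bar> \<le> \<bar>y\<bar>" "d y = y * deriv d z"
  proof (cases "y > 0")
    case True
    then obtain z where "0 < z" "z < y" "d y - d 0 = (y - 0) * deriv d z" using MVT2[of 0 y d "deriv d"] D by blast
    then show ?thesis using that[of z] d0 by auto
  next
    case False
    then have "y < 0" using \<open>y \<noteq> 0\<close> by simp
    then obtain z where "y < z" "z < 0" "d 0 - d y = (0 - y) * deriv d z" using MVT2[of y 0 d "deriv d"] D by blast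
    then show ?thesis using that[of z] d0 by auto
  qed
  have "\<bar>z\<bar> powr q \<le> S powr q" using z(2) yS q by (intro powr_mono2) auto
  then have "d2 * \<bar>z\<bar> powr q \<le> d2 * S powr q" using d2 by (rule mult_left_mono)
  moreover have "\<bar>deriv d z\<bar> \<le> d1 + d2 * \<bar>z\<bar> powr q" using bd z(1) by blast
  ultimately have dz: "\<bar>deriv d z\<bar> \<le> d1 + d2 * S powr q" by linarith
  then have "\<bar>d y\<bar> \<le> \<bar>y\<bar> * (d1 + d2 * S powr q)" using z(3) by (simp add: abs_mult mult_left_mono)
  also have "\<dots> \<le> S * (d1 + d2 * S powr q)"
    using yS dz by (intro mult_right_mono) auto
  finally show ?thesis by (simp add: mult.commute)
qed



lemma abs_half_sq: "\<bar>y\<bar> \<le> 1/2 + 1/2 * y\<^sup>2" for y :: real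
proof -
  have "0 \<le> (\<bar>y\<bar> - 1)\<^sup>2" by simp
  then show ?thesis unfolding power2_diff power2_abs by simp
qed

lemma I01_abs_bound:
  fixes u :: "real \<Rightarrow> real"
  assumes sq: "set_integrable lborel {0<..<1} (\<lambda>x. (u x)\<^sup>2)"
  shows "I01 (\<lambda>x. \<bar>u x\<bar>) \<le> 1/2 + 1/2 * I01 (\<lambda>x. (u x)\<^sup>2)"
proof -
  have sq2: "set_integrable lborel {0<..<1} (\<lambda>x. 1/2 * (u x)\<^sup>2)"
    by (rule set_integrable_mult_right) (rule sq)
  have F: "set_integrable lborel {0<..<1} (\<lambda>x. 1/2 + 1/2 * (u x)\<^sup>2)"
    by (rule set_integral_add(1)[OF I01_const_int sq2])
  have "I01 (\<lambda>x. \<bar>u x\<bar>) \<le> I01 (\<lambda>x. 1/2 + 1/2 * (u x)\<^sup>2)"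
    by (rule I01_mono'[OF F], rule AE_I2, rule impI, rule abs_half_sq, simp)
  also have "\<dots> = 1/2 + 1/2 * I01 (\<lambda>x. (u x)\<^sup>2)"
    using set_integral_add(2)[OF I01_const_int sq2] by (simp only: I01_const set_integral_mult_right)
  finally show ?thesis .
qed

lemma osc_bound:
  fixes u u' :: "real \<Rightarrow> real"
  assumes der: "\<And>x. x \<in> {0..1} \<Longrightarrow> (u has_real_derivative u' x) (at x within {0..1})"
    and cu': "continuous_on {0..1} u'"
    and x: "x \<in> {0..1}" and y: "y \<in> {0..1}"
  shows "\<bar>u x - u y\<bar> \<le> I01 (\<lambda>x. \<bar>u' x\<bar>)"
proof -
  have cabs: "continuous_on {0..1} (\<lambda>x. \<bar>u' x\<bar>)" using cu' by (intro continuous_intros)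
  have gen: "\<bar>u b - u a\<bar> \<le> integral {0..1} (\<lambda>x. \<bar>u' x\<bar>)" if ab: "a \<le> b" "a \<in> {0..1}" "b \<in> {0..1}" for a b
  proof -
    have sub: "{a..b} \<subseteq> {0..1}" using ab by auto
    have "(u' has_integral (u b - u a)) {a..b}"
    proof (rule fundamental_theorem_of_calculus[OF ab(1)])
      fix z assume "z \<in> {a..b}"
      then have "(u has_real_derivative u' z) (at z within {0..1})" using der sub by auto
      then have "(u has_real_derivative u' z) (at z within {a..b})" using DERIV_subset sub by blast
      then show "(u has_vector_derivative u' z) (at z within {a..b})"
        by (simp add: has_real_derivative_iff_has_vector_derivative)
    qed
    then have eq: "integral {a..b} u' = u b - u a" by (rule integral_unique)
    have i1: "u' integrable_on {a..b}" using continuous_on_subset[OF cu' sub] by (rule integrable_continuous_interval)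
    have i2: "(\<lambda>x. \<bar>u' x\<bar>) integrable_on {a..b}" using continuous_on_subset[OF cabs sub] by (rule integrable_continuous_interval)
    have i3: "(\<lambda>x. \<bar>u' x\<bar>) integrable_on {0..1}" using cabs by (rule integrable_continuous_interval)
    have "\<bar>u b - u a\<bar> = norm (integral {a..b} u')" using eq by simp
    also have "\<dots> \<le> integral {a..b} (\<lambda>x. \<bar>u' x\<bar>)"
      by (rule integral_norm_bound_integral[OF i1 i2]) simp
    also have "\<dots> \<le> integral {0..1} (\<lambda>x. \<bar>u' x\<bar>)"
      by (rule integral_subset_le[OF sub i2 i3]) simp
    finally show ?thesis .
  qed
  have "\<bar>u x - u y\<bar> \<le> integral {0..1} (\<lambda>x. \<bar>u' x\<bar>)"
  proof (cases "y \<le> x")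
    case True then show ?thesis using gen[of y x] x y by simp
  next
    case False then show ?thesis using gen[of x y] x y by (simp add: abs_minus_commute)
  qed
  then show ?thesis using cont_LINT(2)[OF cabs] by simp
qed

lemma sup_bound:
  fixes u u' :: "real \<Rightarrow> real"
  assumes der: "\<And>x. x \<in> {0..1} \<Longrightarrow> (u has_real_derivative u' x) (at x within {0..1})"
    and cu': "continuous_on {0..1} u'"
    and x: "x \<in> {0..1}"
  shows "\<bar>u x\<bar> \<le> I01 (\<lambda>x. (u x)\<^sup>2) + I01 (\<lambda>x. (u' x)\<^sup>2) + 2"
proof -
  have cu: "continuous_on {0..1} u" by (rule DERIV_continuous_on[OF der])
  have cu2: "continuous_on {0..1} (\<lambda>x. (u x)\<^sup>2)" using cu by (intro continuous_intros)
  have cu'2: "continuous_on {0..1} (\<lambda>x. (u' x)\<^sup>2)" using cu' by (intro continuous_intros)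
  define A where "A = I01 (\<lambda>x. (u x)\<^sup>2)"
  define B where "B = I01 (\<lambda>x. (u' x)\<^sup>2)"
  have A0: "A \<ge> 0" unfolding A_def by (rule I01_nonneg) simp
  have B0: "B \<ge> 0" unfolding B_def by (rule I01_nonneg) simp
  obtain y where y: "y \<in> {0<..<1}" "(u y)\<^sup>2 \<le> A + 1"
  proof (rule ccontr)
    assume "\<not> thesis"
    then have h: "\<And>y. y \<in> {0<..<1} \<Longrightarrow> A + 1 < (u y)\<^sup>2" using that by force
    have "I01 (\<lambda>_. A + 1) \<le> I01 (\<lambda>x. (u x)\<^sup>2)"
      by (rule I01_mono'[OF cont_LINT(1)[OF cu2]], rule AE_I2, use h in \<open>auto intro: less_imp_le\<close>)
    then show False unfolding I01_const A_def[symmetric] by simp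
  qed
  have "\<bar>u y\<bar> \<le> 1/2 + 1/2 * (u y)\<^sup>2" by (rule abs_half_sq)
  also have "\<dots> \<le> 1 + A/2" using y(2) by simp
  finally have uy: "\<bar>u y\<bar> \<le> 1 + A/2" .
  have "\<bar>u x - u y\<bar> \<le> I01 (\<lambda>x. \<bar>u' x\<bar>)" using osc_bound[OF der cu' x] y(1) by auto
  also have "\<dots> \<le> 1/2 + 1/2 * B" unfolding B_def by (rule I01_abs_bound[OF cont_LINT(1)[OF cu'2]])
  finally have "\<bar>u x - u y\<bar> \<le> 1/2 + 1/2 * B" .
  then have "\<bar>u x\<bar> \<le> 3/2 + A/2 + B/2" using uy by linarith
  then show ?thesis using A0 B0 unfolding A_def B_def by linarith
qed



lemma slice_x:
  assumes "continuous_on U (\<lambda>z. w (fst z) (snd z))" "\<And>x. x \<in> S \<Longrightarrow> (x, s) \<in> U"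
  shows "continuous_on S (\<lambda>x. w x s)"
proof -
  have c: "continuous_on S (\<lambda>x. (x, s))" by (intro continuous_intros)
  show ?thesis using continuous_on_compose2[OF assms(1) c] assms(2) by auto
qed

lemma slice_t:
  assumes "continuous_on U (\<lambda>z. w (fst z) (snd z))" "\<And>s. s \<in> S \<Longrightarrow> (x, s) \<in> U"
  shows "continuous_on S (\<lambda>s. w x s)"
proof -
  have c: "continuous_on S (\<lambda>s. (x, s))" by (intro continuous_intros)
  show ?thesis using continuous_on_compose2[OF assms(1) c] assms(2) by auto
qed

lemma swap_cont:
  assumes "continuous_on U (\<lambda>z. w (fst z) (snd z))" "\<And>s x. s \<in> A \<Longrightarrow> x \<in> B \<Longrightarrow> (x, s) \<in> U"
  shows "continuous_on (A \<times> B) (\<lambda>z. w (snd z) (fst z))"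
proof -
  have c: "continuous_on (A \<times> B) (\<lambda>z. (snd z, fst z))" by (intro continuous_intros)
  show ?thesis using continuous_on_compose2[OF assms(1) c] assms(2) by (auto simp: image_subset_iff)
qed

lemma sqrt_le_1plus:
  fixes a :: real assumes a: "a \<ge> 0" shows "sqrt a \<le> 1 + a"
proof -
  have "0 \<le> a * a" using a by simp
  then have "a \<le> (1 + a)\<^sup>2" using a by (simp add: power2_eq_square algebra_simps)
  then have "sqrt a \<le> sqrt ((1 + a)\<^sup>2)" by (rule real_sqrt_le_mono)
  also have "\<dots> = 1 + a" using a by simp
  finally show ?thesis .
qed

lemma sq_diff2: "(a - b)\<^sup>2 \<le> 2 * a\<^sup>2 + 2 * b\<^sup>2" for a b :: real
proof -
  have "0 \<le> (a + b)\<^sup>2" by simp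
  then show ?thesis by (simp add: power2_eq_square algebra_simps)
qed

lemma sq_diff3: "(a - b - c)\<^sup>2 \<le> 3 * a\<^sup>2 + 3 * b\<^sup>2 + 3 * c\<^sup>2" for a b c :: real
proof -
  have "0 \<le> (a + b)\<^sup>2 + (a + c)\<^sup>2 + (b - c)\<^sup>2" by simp
  then show ?thesis by (simp add: power2_eq_square algebra_simps)
qed

lemma I01_lin2:
  fixes u v :: "real \<Rightarrow> real"
  assumes "set_integrable lborel {0<..<1} u" "set_integrable lborel {0<..<1} v"
  shows "set_integrable lborel {0<..<1} (\<lambda>x. a * u x + b * v x)"
    "I01 (\<lambda>x. a * u x + b * v x) = a * I01 u + b * I01 v"
proof -
  have 1: "set_integrable lborel {0<..<1} (\<lambda>x. a * u x)" by (rule set_integrable_mult_right) (rule assms(1))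
  have 2: "set_integrable lborel {0<..<1} (\<lambda>x. b * v x)" by (rule set_integrable_mult_right) (rule assms(2))
  show "set_integrable lborel {0<..<1} (\<lambda>x. a * u x + b * v x)" by (rule set_integral_add(1)[OF 1 2])
  show "I01 (\<lambda>x. a * u x + b * v x) = a * I01 u + b * I01 v"
    using set_integral_add(2)[OF 1 2] by (simp only: set_integral_mult_right)
qed

lemma I01_lin3:
  fixes u v :: "real \<Rightarrow> real"
  assumes "set_integrable lborel {0<..<1} u" "set_integrable lborel {0<..<1} v"
  shows "set_integrable lborel {0<..<1} (\<lambda>x. a * u x + b * v x + c)"
    "I01 (\<lambda>x. a * u x + b * v x + c) = a * I01 u + b * I01 v + c"
proof -
  note l = I01_lin2[OF assms, of a b]
  show "set_integrable lborel {0<..<1} (\<lambda>x. a * u x + b * v x + c)" by (rule set_integral_add(1)[OF l(1) I01_const_int])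
  show "I01 (\<lambda>x. a * u x + b * v x + c) = a * I01 u + b * I01 v + c"
    using set_integral_add(2)[OF l(1) I01_const_int] l(2) I01_const by simp
qed

lemma sq_le_of_abs: "\<bar>a\<bar> \<le> b \<Longrightarrow> a\<^sup>2 \<le> b\<^sup>2" for a b :: real
  using power_mono[of "\<bar>a\<bar>" b 2] by simp



definition Cf :: "real \<Rightarrow> real \<Rightarrow> real \<Rightarrow> real \<Rightarrow> real \<Rightarrow> real \<Rightarrow> real \<Rightarrow> real \<Rightarrow> real \<Rightarrow> real" where
  "Cf d0 d1 d2 q F G H P0 M0 =
    (let S0 = M0\<^sup>2 + 2; D0 = (d1 + d2 * S0 powr q) * S0;
         E0 = 2 * F\<^sup>2 + 2 * M0\<^sup>2 + 3 * G\<^sup>2 + 3 * P0\<^sup>2 + 3 * D0\<^sup>2;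
         K = 1/2 + 1/2 * G\<^sup>2 + (1/2 + 1/2 * E0) + H + 1;
         Sm = K / d0 + (1/2 + 1/2 * (2 * F\<^sup>2 + 2 * E0))
     in 3 + E0 + E0 + Sm\<^sup>2 + (2 * F\<^sup>2 + 2 * E0))"

lemma main:
  fixes d :: "real \<Rightarrow> real" and d0 d1 d2 q :: real
  assumes dC: "d C1_differentiable_on UNIV" and dz: "d 0 = 0"
    and d0: "d0 > 0" and d1: "d1 \<ge> 0" and d2: "d2 \<ge> 0" and q: "q \<ge> 0"
    and dd: "\<forall>y. deriv d y > d0"
    and db: "\<forall>y. y \<noteq> 0 \<longrightarrow> \<bar>deriv d y\<bar> \<le> d1 + d2 * \<bar>y\<bar> powr q"
    and f: "in_L2 f" and g: "in_L2 g" and T: "T > 0"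
    and U: "open U" "{0..1} \<times> {0..T} \<subseteq> U" and sp: "smooth_on2 U p" and sm: "smooth_on2 U m"
    and eq1: "\<forall>t\<in>{0..T}. AE x in lborel. x \<in> {0<..<1} \<longrightarrow>
            deriv (\<lambda>s. p x s) t + deriv (\<lambda>y. m y t) x = f x"
    and eq2: "\<forall>t\<in>{0..T}. AE x in lborel. x \<in> {0<..<1} \<longrightarrow>
            deriv (\<lambda>s. m x s) t + deriv (\<lambda>y. p y t) x + d (m x t) = g x"
    and bc: "\<forall>t\<in>{0..T}. p 0 t = h0 \<and> p 1 t = h1"
    and t: "t \<in> {0..T}"
  shows "L2norm (\<lambda>x. deriv (\<lambda>s. p x s) t) + L2norm (\<lambda>x. deriv (\<lambda>s. m x s) t)
              + H1norm (\<lambda>x. m x t)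
            \<le> Cf d0 d1 d2 q (L2norm f) (L2norm g) (\<bar>h0\<bar> + \<bar>h1\<bar>) (H1norm (\<lambda>x. p x 0)) (H1norm (\<lambda>x. m x 0))"
proof -
  obtain Fp DXp DTp where Fp: "p \<in> Fp" "\<And>v. v \<in> Fp \<Longrightarrow> DXp v \<in> Fp \<and> DTp v \<in> Fp \<and> D2 U v (DXp v) (DTp v)"
    using smooth_unpack[OF sp] by blast
  obtain Fm DXm DTm where Fm: "m \<in> Fm" "\<And>v. v \<in> Fm \<Longrightarrow> DXm v \<in> Fm \<and> DTm v \<in> Fm \<and> D2 U v (DXm v) (DTm v)"
    using smooth_unpack[OF sm] by blast
  define px where "px = DXp p"
  define pt where "pt = DTp p"
  define ptx where "ptx = DXp pt"
  define ptt where "ptt = DTp pt"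
  define pxt where "pxt = DTp px"
  define pxx where "pxx = DXp px"
  define mx where "mx = DXm m"
  define mt where "mt = DTm m"
  define mtx where "mtx = DXm mt"
  define mtt where "mtt = DTm mt"
  define mxt where "mxt = DTm mx"
  define mxx where "mxx = DXm mx"
  have inFp: "px \<in> Fp" "pt \<in> Fp" "ptx \<in> Fp" "ptt \<in> Fp" "pxt \<in> Fp" "pxx \<in> Fp"
    using Fp unfolding px_def pt_def ptx_def ptt_def pxt_def pxx_def by blast+
  have inFm: "mx \<in> Fm" "mt \<in> Fm" "mtx \<in> Fm" "mtt \<in> Fm" "mxt \<in> Fm" "mxx \<in> Fm"
    using Fm unfolding mx_def mt_def mtx_def mtt_def mxt_def mxx_def by blast+
  have Dp: "D2 U p px pt" "D2 U px pxx pxt" "D2 U pt ptx ptt"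
    using Fp inFp unfolding px_def pt_def ptx_def ptt_def pxt_def pxx_def by blast+
  have Dm: "D2 U m mx mt" "D2 U mx mxx mxt" "D2 U mt mtx mtt"
    using Fm inFm unfolding mx_def mt_def mtx_def mtt_def mxt_def mxx_def by blast+
  have cFp: "\<And>w. w \<in> Fp \<Longrightarrow> continuous_on U (\<lambda>z. w (fst z) (snd z))"
    using Fp(2) D2_cont by blast
  have cFm: "\<And>w. w \<in> Fm \<Longrightarrow> continuous_on U (\<lambda>z. w (fst z) (snd z))"
    using Fm(2) D2_cont by blast
  have inU: "\<And>x s. x \<in> {0..1} \<Longrightarrow> s \<in> {0..T} \<Longrightarrow> (x, s) \<in> U" using U(2) by auto
  have inU': "\<And>x s. x \<in> {0<..<1} \<Longrightarrow> s \<in> {0..T} \<Longrightarrow> (x, s) \<in> U" using inU by auto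
  have T0: "0 \<in> {0..T}" using T by simp
  have dD: "\<And>y. DERIV d y :> deriv d y" using d_deriv[OF dC] .
  have dcont: "continuous_on UNIV d"
    by (rule DERIV_continuous_on[where D="deriv d"]) (use dD in auto)
  have csp: "\<And>w s. w \<in> Fp \<Longrightarrow> s \<in> {0..T} \<Longrightarrow> continuous_on {0..1} (\<lambda>x. w x s)"
    using cFp inU by (blast intro: slice_x)
  have csm: "\<And>w s. w \<in> Fm \<Longrightarrow> s \<in> {0..T} \<Longrightarrow> continuous_on {0..1} (\<lambda>x. w x s)"
    using cFm inU by (blast intro: slice_x)
  have cdm: "\<And>s. s \<in> {0..T} \<Longrightarrow> continuous_on {0..1} (\<lambda>x. d (m x s))"
    using continuous_on_compose2[OF dcont csm[OF Fm(1)]] by auto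
  have dvp: "\<And>x s. (x, s) \<in> U \<Longrightarrow> deriv (\<lambda>s. p x s) s = pt x s"
    using D2_dt[OF Dp(1)] by (blast intro: DERIV_imp_deriv)
  have dvm: "\<And>x s. (x, s) \<in> U \<Longrightarrow> deriv (\<lambda>s. m x s) s = mt x s"
    using D2_dt[OF Dm(1)] by (blast intro: DERIV_imp_deriv)
  have dxp: "\<And>x s. (x, s) \<in> U \<Longrightarrow> deriv (\<lambda>y. p y s) x = px x s"
    using D2_dx[OF Dp(1)] by (blast intro: DERIV_imp_deriv)
  have dxm: "\<And>x s. (x, s) \<in> U \<Longrightarrow> deriv (\<lambda>y. m y s) x = mx x s"
    using D2_dx[OF Dm(1)] by (blast intro: DERIV_imp_deriv)
  have ae1: "AE x in lborel. x \<in> {0<..<1} \<longrightarrow> pt x s + mx x s = f x" if s: "s \<in> {0..T}" for s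
    using eq1 s by (rule_tac AE_mp[OF bspec[OF eq1 s]]) (auto intro!: AE_I2 simp: dvp dxm inU')
  have ae2: "AE x in lborel. x \<in> {0<..<1} \<longrightarrow> mt x s + px x s + d (m x s) = g x" if s: "s \<in> {0..T}" for s
    using eq2 s by (rule_tac AE_mp[OF bspec[OF eq2 s]]) (auto intro!: AE_I2 simp: dvm dxp inU')
  have EQ1: "pt x s + mx x s = pt x 0 + mx x 0" if x: "x \<in> {0<..<1}" and s: "s \<in> {0..T}" for x s
  proof -
    have "(\<lambda>x. (pt x s + mx x s) - (pt x 0 + mx x 0)) x = 0"
    proof (rule ae_cont_zero[OF _ _ x])
      have "continuous_on {0..1} (\<lambda>x. pt x s + mx x s - (pt x 0 + mx x 0))"
        using csp[OF inFp(2) s] csm[OF inFm(1) s] csp[OF inFp(2) T0] csm[OF inFm(1) T0]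
        by (auto intro!: continuous_intros)
      then show "continuous_on {0<..<1} (\<lambda>x. pt x s + mx x s - (pt x 0 + mx x 0))"
        by (rule continuous_on_subset) auto
      show "AE x in lborel. x \<in> {0<..<1} \<longrightarrow> pt x s + mx x s - (pt x 0 + mx x 0) = 0"
        using ae1[OF s] ae1[OF T0] by eventually_elim auto
    qed
    then show ?thesis by simp
  qed
  have EQ2: "mt x s + px x s + d (m x s) = mt x 0 + px x 0 + d (m x 0)" if x: "x \<in> {0<..<1}" and s: "s \<in> {0..T}" for x s
  proof -
    have "(\<lambda>x. (mt x s + px x s + d (m x s)) - (mt x 0 + px x 0 + d (m x 0))) x = 0"
    proof (rule ae_cont_zero[OF _ _ x])
      have "continuous_on {0..1} (\<lambda>x. mt x s + px x s + d (m x s) - (mt x 0 + px x 0 + d (m x 0)))"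
        using csm[OF inFm(2) s] csp[OF inFp(1) s] cdm[OF s] csm[OF inFm(2) T0] csp[OF inFp(1) T0] cdm[OF T0]
        by (auto intro!: continuous_intros)
      then show "continuous_on {0<..<1} (\<lambda>x. mt x s + px x s + d (m x s) - (mt x 0 + px x 0 + d (m x 0)))"
        by (rule continuous_on_subset) auto
      show "AE x in lborel. x \<in> {0<..<1} \<longrightarrow> mt x s + px x s + d (m x s) - (mt x 0 + px x 0 + d (m x 0)) = 0"
        using ae2[OF s] ae2[OF T0] by eventually_elim auto
    qed
    then show ?thesis by simp
  qed
  have DT1: "ptt x s + mxt x s = 0" if x: "x \<in> {0<..<1}" and s: "s \<in> {0<..<T}" for x s
  proof -
    have xs: "(x, s) \<in> U" using inU' x s by auto
    have a: "((\<lambda>r. pt x r + mx x r) has_real_derivative ptt x s + mxt x s) (at s)"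
      by (rule DERIV_add[OF D2_dt[OF Dp(3) xs] D2_dt[OF Dm(2) xs]])
    have b: "((\<lambda>r. pt x r + mx x r) has_real_derivative 0) (at s)"
    proof (rule has_field_derivative_transform_within_open[OF DERIV_const[of "pt x 0 + mx x 0"] open_greaterThanLessThan])
      show "s \<in> {0<..<T}" using s .
      fix r assume r: "r \<in> {0<..<T}"
      show "pt x 0 + mx x 0 = pt x r + mx x r" using EQ1[OF x, of r] r by simp
    qed
    show ?thesis using DERIV_unique[OF a b] .
  qed
  have DT2: "mtt x s + pxt x s + deriv d (m x s) * mt x s = 0" if x: "x \<in> {0<..<1}" and s: "s \<in> {0<..<T}" for x s
  proof -
    have xs: "(x, s) \<in> U" using inU' x s by auto
    have a: "((\<lambda>r. mt x r + px x r + d (m x r)) has_real_derivative mtt x s + pxt x s + deriv d (m x s) * mt x s) (at s)"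
      by (rule DERIV_add[OF DERIV_add[OF D2_dt[OF Dm(3) xs] D2_dt[OF Dp(2) xs]] DERIV_chain2[OF dD D2_dt[OF Dm(1) xs]]])
    have b: "((\<lambda>r. mt x r + px x r + d (m x r)) has_real_derivative 0) (at s)"
    proof (rule has_field_derivative_transform_within_open[OF DERIV_const[of "mt x 0 + px x 0 + d (m x 0)"] open_greaterThanLessThan])
      show "s \<in> {0<..<T}" using s .
      fix r assume r: "r \<in> {0<..<T}"
      show "mt x 0 + px x 0 + d (m x 0) = mt x r + px x r + d (m x r)" using EQ2[OF x, of r] r by simp
    qed
    show ?thesis using DERIV_unique[OF a b] .
  qed
  have BC: "pt 0 s = 0 \<and> pt 1 s = 0" if s: "s \<in> {0<..<T}" for s
  proof -
    have s0: "(0, s) \<in> U" "(1, s) \<in> U" using inU s by auto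
    have b0: "((\<lambda>r. p 0 r) has_real_derivative 0) (at s)"
    proof (rule has_field_derivative_transform_within_open[OF DERIV_const[of h0] open_greaterThanLessThan])
      show "s \<in> {0<..<T}" using s .
      fix r assume r: "r \<in> {0<..<T}"
      show "h0 = p 0 r" using bc r by simp
    qed
    have b1: "((\<lambda>r. p 1 r) has_real_derivative 0) (at s)"
    proof (rule has_field_derivative_transform_within_open[OF DERIV_const[of h1] open_greaterThanLessThan])
      show "s \<in> {0<..<T}" using s .
      fix r assume r: "r \<in> {0<..<T}"
      show "h1 = p 1 r" using bc r by simp
    qed
    show ?thesis using DERIV_unique[OF D2_dt[OF Dp(1) s0(1)] b0] DERIV_unique[OF D2_dt[OF Dp(1) s0(2)] b1] by simp
  qed
  have SYM: "mxt x s = mtx x s \<and> pxt x s = ptx x s" if xs: "(x, s) \<in> U" for x s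
    using D2_sym[OF U(1) Dm cFm[OF inFm(5)] xs] D2_sym[OF U(1) Dp cFp[OF inFp(5)] xs] by simp
  define En where "En s = integral {0..1} (\<lambda>x. (pt x s)\<^sup>2 + (mt x s)\<^sup>2)" for s
  define En' where "En' s = integral {0..1} (\<lambda>x. 2 * pt x s * ptt x s + 2 * mt x s * mtt x s)" for s
  have Ender: "(En has_real_derivative En' s) (at s within {0..T})" if s: "s \<in> {0..T}" for s
  proof -
    have "((\<lambda>s. integral (cbox 0 1) (\<lambda>x. (pt x s)\<^sup>2 + (mt x s)\<^sup>2)) has_real_derivative
        integral (cbox 0 1) (\<lambda>x. 2 * pt x s * ptt x s + 2 * mt x s * mtt x s)) (at s within {0..T})"
    proof (rule leibniz_rule_field_derivative[where fx="\<lambda>s x. 2 * pt x s * ptt x s + 2 * mt x s * mtt x s"])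
      fix r x assume r: "r \<in> {0..T}" and x: "x \<in> cbox (0::real) 1"
      then have xr: "(x, r) \<in> U" using inU by auto
      have "((\<lambda>r. (pt x r)\<^sup>2 + (mt x r)\<^sup>2) has_real_derivative
          (2 * pt x r * ptt x r + 2 * mt x r * mtt x r)) (at r within {0..T})"
        using D2_dt[OF Dp(3) xr] D2_dt[OF Dm(3) xr]
        by (auto intro!: derivative_eq_intros)
      then show "((\<lambda>r. (pt x r)\<^sup>2 + (mt x r)\<^sup>2) has_real_derivative
          (2 * pt x r * ptt x r + 2 * mt x r * mtt x r)) (at r within {0..T})" .
    next
      fix r assume r: "r \<in> {0..T}"
      have "continuous_on {0..1} (\<lambda>x. (pt x r)\<^sup>2 + (mt x r)\<^sup>2)"
        using csp[OF inFp(2) r] csm[OF inFm(2) r] by (auto intro!: continuous_intros)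
      then show "(\<lambda>x. (pt x r)\<^sup>2 + (mt x r)\<^sup>2) integrable_on cbox 0 1"
        by (simp add: integrable_continuous_interval)
    next
      have c1: "continuous_on ({0..T} \<times> cbox 0 1) (\<lambda>z. w (snd z) (fst z))" if "w \<in> Fp" for w
        by (rule swap_cont[OF cFp[OF that]]) (use inU in auto)
      have c2: "continuous_on ({0..T} \<times> cbox 0 1) (\<lambda>z. w (snd z) (fst z))" if "w \<in> Fm" for w
        by (rule swap_cont[OF cFm[OF that]]) (use inU in auto)
      have "continuous_on ({0..T} \<times> cbox 0 1) (\<lambda>z. 2 * pt (snd z) (fst z) * ptt (snd z) (fst z) + 2 * mt (snd z) (fst z) * mtt (snd z) (fst z))"
        using c1[OF inFp(2)] c1[OF inFp(4)] c2[OF inFm(2)] c2[OF inFm(4)]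
        by (auto intro!: continuous_intros)
      then show "continuous_on ({0..T} \<times> cbox 0 1) (\<lambda>(s, x). 2 * pt x s * ptt x s + 2 * mt x s * mtt x s)"
        by (simp add: case_prod_beta')
    qed (use s in auto)
    then show ?thesis unfolding En_def En'_def by simp
  qed
  have Encont: "continuous_on {0..T} En" by (rule DERIV_continuous_on[OF Ender])
  have En'neg: "En' z \<le> 0" if z: "z \<in> {0<..<T}" for z
  proof -
    have z': "z \<in> {0..T}" using z by auto
    have c1: "continuous_on {0..1} (\<lambda>x. 2 * pt x z * ptt x z + 2 * mt x z * mtt x z)"
      using csp[OF inFp(2) z'] csp[OF inFp(4) z'] csm[OF inFm(2) z'] csm[OF inFm(4) z']
      by (auto intro!: continuous_intros)
    have c2: "continuous_on {0..1} (\<lambda>x. -2 * (ptx x z * mt x z + pt x z * mtx x z))"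
      using csp[OF inFp(2) z'] csp[OF inFp(3) z'] csm[OF inFm(2) z'] csm[OF inFm(3) z']
      by (auto intro!: continuous_intros)
    have pw: "2 * pt x z * ptt x z + 2 * mt x z * mtt x z \<le> -2 * (ptx x z * mt x z + pt x z * mtx x z)"
      if x: "x \<in> {0<..<1}" for x
    proof -
      have xz: "(x, z) \<in> U" using inU' x z' by auto
      have e1: "ptt x z = - mtx x z" using DT1[OF x z] SYM[OF xz] by simp
      have e2: "mtt x z = - ptx x z - deriv d (m x z) * mt x z" using DT2[OF x z] SYM[OF xz] by simp
      have nn: "0 \<le> deriv d (m x z) * (mt x z)\<^sup>2"
        using dd d0 by (intro mult_nonneg_nonneg) (auto intro: less_imp_le order.strict_trans[of 0 d0])
      have "2 * pt x z * ptt x z + 2 * mt x z * mtt x z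
          = -2 * (ptx x z * mt x z + pt x z * mtx x z) - 2 * (deriv d (m x z) * (mt x z)\<^sup>2)"
        unfolding e1 e2 by (simp add: algebra_simps power2_eq_square)
      then show ?thesis using nn by linarith
    qed
    have "En' z = integral {0<..<1} (\<lambda>x. 2 * pt x z * ptt x z + 2 * mt x z * mtt x z)"
      unfolding En'_def by (rule integral_open_interval_real)
    also have "\<dots> \<le> integral {0<..<1} (\<lambda>x. -2 * (ptx x z * mt x z + pt x z * mtx x z))"
    proof (rule integral_le)
      show "(\<lambda>x. 2 * pt x z * ptt x z + 2 * mt x z * mtt x z) integrable_on {0<..<1}"
        using integrable_continuous_interval[OF c1] integrable_on_open_interval_real by blast
      show "(\<lambda>x. -2 * (ptx x z * mt x z + pt x z * mtx x z)) integrable_on {0<..<1}"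
        using integrable_continuous_interval[OF c2] integrable_on_open_interval_real by blast
    qed (rule pw)
    also have "\<dots> = integral {0..1} (\<lambda>x. -2 * (ptx x z * mt x z + pt x z * mtx x z))"
      by (rule integral_open_interval_real[symmetric])
    also have "\<dots> = -2 * (pt 1 z * mt 1 z) - -2 * (pt 0 z * mt 0 z)"
    proof (rule integral_unique, rule fundamental_theorem_of_calculus)
      fix x assume x: "x \<in> {0..(1::real)}"
      then have xz: "(x, z) \<in> U" using inU z' by auto
      have "((\<lambda>x. -2 * (pt x z * mt x z)) has_real_derivative -2 * (ptx x z * mt x z + pt x z * mtx x z)) (at x within {0..1})"
        using D2_dx[OF Dp(3) xz] D2_dx[OF Dm(3) xz]
        by (auto intro!: derivative_eq_intros simp: algebra_simps)
      then show "((\<lambda>x. -2 * (pt x z * mt x z)) has_vector_derivative -2 * (ptx x z * mt x z + pt x z * mtx x z)) (at x within {0..1})"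
        by (simp add: has_real_derivative_iff_has_vector_derivative)
    qed simp
    also have "\<dots> = 0" using BC[OF z] by simp
    finally show ?thesis .
  qed
  have Enle: "En s \<le> En 0" if s: "s \<in> {0..T}" for s
  proof -
    have s0: "0 \<le> s" using s by simp
    have cs: "continuous_on {0..s} En" using continuous_on_subset[OF Encont] s by auto
    have dz: "\<exists>y. (En has_real_derivative y) (at z) \<and> y \<le> 0" if z: "0 < z" "z < s" for z
    proof -
      have zT: "z \<in> {0<..<T}" "z \<in> {0..T}" using s z by auto
      have "(En has_real_derivative En' z) (at z)"
        using Ender[OF zT(2)] at_within_Icc_at[of 0 z T] zT(1) by simp
      then show ?thesis using En'neg[OF zT(1)] by blast
    qed
    show ?thesis using DERIV_nonpos_imp_decreasing_open[of 0 s En, OF s0 dz cs] by simp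
  qed
  define F0 where "F0 = L2norm f"
  define G0 where "G0 = L2norm g"
  define H where "H = \<bar>h0\<bar> + \<bar>h1\<bar>"
  define P0 where "P0 = H1norm (\<lambda>x. p x 0)"
  define M0 where "M0 = H1norm (\<lambda>x. m x 0)"
  define S0 where "S0 = M0\<^sup>2 + 2"
  define D0 where "D0 = (d1 + d2 * S0 powr q) * S0"
  define E0 where "E0 = 2 * F0\<^sup>2 + 2 * M0\<^sup>2 + 3 * G0\<^sup>2 + 3 * P0\<^sup>2 + 3 * D0\<^sup>2"
  define K where "K = 1/2 + 1/2 * G0\<^sup>2 + (1/2 + 1/2 * E0) + H + 1"
  define Sm where "Sm = K / d0 + (1/2 + 1/2 * (2 * F0\<^sup>2 + 2 * E0))"
  have Cf_eq: "Cf d0 d1 d2 q F0 G0 H P0 M0 = 3 + E0 + E0 + Sm\<^sup>2 + (2 * F0\<^sup>2 + 2 * E0)"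
    unfolding Cf_def Let_def S0_def D0_def E0_def K_def Sm_def by (rule refl)
  have fsq: "set_integrable lborel {0<..<1} (\<lambda>x. (f x)\<^sup>2)" using f unfolding in_L2_def by blast
  have gsq: "set_integrable lborel {0<..<1} (\<lambda>x. (g x)\<^sup>2)" using g unfolding in_L2_def by blast
  have IF: "I01 (\<lambda>x. (f x)\<^sup>2) = F0\<^sup>2" unfolding F0_def L2norm_sq ..
  have IG: "I01 (\<lambda>x. (g x)\<^sup>2) = G0\<^sup>2" unfolding G0_def L2norm_sq ..
  have sqp: "continuous_on {0..1} (\<lambda>x. (w x s)\<^sup>2)" if "w \<in> Fp" "s \<in> {0..T}" for w s
    using csp[OF that] by (intro continuous_intros)
  have sqm: "continuous_on {0..1} (\<lambda>x. (w x s)\<^sup>2)" if "w \<in> Fm" "s \<in> {0..T}" for w s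
    using csm[OF that] by (intro continuous_intros)
  define Apt where "Apt s = I01 (\<lambda>x. (pt x s)\<^sup>2)" for s
  define Amt where "Amt s = I01 (\<lambda>x. (mt x s)\<^sup>2)" for s
  define Amx where "Amx s = I01 (\<lambda>x. (mx x s)\<^sup>2)" for s
  define Am where "Am s = I01 (\<lambda>x. (m x s)\<^sup>2)" for s
  have Apt0: "Apt s \<ge> 0" for s unfolding Apt_def by (rule I01_nonneg) simp
  have Amt0: "Amt s \<ge> 0" for s unfolding Amt_def by (rule I01_nonneg) simp
  have Amx0: "Amx s \<ge> 0" for s unfolding Amx_def by (rule I01_nonneg) simp
  have Am0: "Am s \<ge> 0" for s unfolding Am_def by (rule I01_nonneg) simp
  have EnA: "En s = Apt s + Amt s" if s: "s \<in> {0..T}" for s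
  proof -
    have c: "continuous_on {0..1} (\<lambda>x. (pt x s)\<^sup>2 + (mt x s)\<^sup>2)"
      using csp[OF inFp(2) s] csm[OF inFm(2) s] by (intro continuous_intros)
    have "En s = I01 (\<lambda>x. (pt x s)\<^sup>2 + (mt x s)\<^sup>2)" unfolding En_def using cont_LINT(2)[OF c] by simp
    also have "\<dots> = Apt s + Amt s" unfolding Apt_def Amt_def
      by (rule set_integral_add(2)[OF cont_LINT(1)[OF sqp[OF inFp(2) s]] cont_LINT(1)[OF sqm[OF inFm(2) s]]])
    finally show ?thesis .
  qed
  have H1m: "(H1norm (\<lambda>x. m x s))\<^sup>2 = Am s + Amx s" if s: "s \<in> {0..T}" for s
  proof -
    have "I01 (\<lambda>x. (deriv (\<lambda>x. m x s) x)\<^sup>2) = Amx s" unfolding Amx_def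
      by (rule set_lebesgue_integral_cong) (use dxm inU' s in auto)
    then show ?thesis unfolding H1norm_sq Am_def by simp
  qed
  have H1p: "(H1norm (\<lambda>x. p x 0))\<^sup>2 = I01 (\<lambda>x. (p x 0)\<^sup>2) + I01 (\<lambda>x. (px x 0)\<^sup>2)"
  proof -
    have "I01 (\<lambda>x. (deriv (\<lambda>x. p x 0) x)\<^sup>2) = I01 (\<lambda>x. (px x 0)\<^sup>2)"
      by (rule set_lebesgue_integral_cong) (use dxp inU' T0 in auto)
    then show ?thesis unfolding H1norm_sq by simp
  qed
  have Ipx0: "I01 (\<lambda>x. (px x 0)\<^sup>2) \<le> P0\<^sup>2"
    using H1p I01_nonneg[of "\<lambda>x. (p x 0)\<^sup>2"] unfolding P0_def by simp
  have Imx0: "Amx 0 \<le> M0\<^sup>2" using H1m[OF T0] Am0[of 0] unfolding M0_def by simp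
  have Apt_le: "Apt s \<le> 2 * F0\<^sup>2 + 2 * Amx s" if s: "s \<in> {0..T}" for s
  proof -
    note l = I01_lin2[OF fsq cont_LINT(1)[OF sqm[OF inFm(1) s]], of 2 2]
    have "Apt s \<le> I01 (\<lambda>x. 2 * (f x)\<^sup>2 + 2 * (mx x s)\<^sup>2)" unfolding Apt_def
    proof (rule I01_mono'[OF l(1)])
      show "AE x in lborel. x \<in> {0<..<1} \<longrightarrow> (pt x s)\<^sup>2 \<le> 2 * (f x)\<^sup>2 + 2 * (mx x s)\<^sup>2"
        using ae1[OF s]
      proof eventually_elim
        case (elim x)
        show ?case
        proof
          assume "x \<in> {0<..<1}"
          then have "pt x s = f x - mx x s" using elim by simp
          then show "(pt x s)\<^sup>2 \<le> 2 * (f x)\<^sup>2 + 2 * (mx x s)\<^sup>2" using sq_diff2 by simp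
        qed
      qed
    qed simp
    also have "\<dots> = 2 * F0\<^sup>2 + 2 * Amx s" unfolding l(2) IF Amx_def ..
    finally show ?thesis .
  qed
  have Amx_le: "Amx s \<le> 2 * F0\<^sup>2 + 2 * Apt s" if s: "s \<in> {0..T}" for s
  proof -
    note l = I01_lin2[OF fsq cont_LINT(1)[OF sqp[OF inFp(2) s]], of 2 2]
    have "Amx s \<le> I01 (\<lambda>x. 2 * (f x)\<^sup>2 + 2 * (pt x s)\<^sup>2)" unfolding Amx_def
    proof (rule I01_mono'[OF l(1)])
      show "AE x in lborel. x \<in> {0<..<1} \<longrightarrow> (mx x s)\<^sup>2 \<le> 2 * (f x)\<^sup>2 + 2 * (pt x s)\<^sup>2"
        using ae1[OF s]
      proof eventually_elim
        case (elim x)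
        show ?case
        proof
          assume "x \<in> {0<..<1}"
          then have "mx x s = f x - pt x s" using elim by simp
          then show "(mx x s)\<^sup>2 \<le> 2 * (f x)\<^sup>2 + 2 * (pt x s)\<^sup>2" using sq_diff2 by simp
        qed
      qed
    qed simp
    also have "\<dots> = 2 * F0\<^sup>2 + 2 * Apt s" unfolding l(2) IF Apt_def ..
    finally show ?thesis .
  qed
  have m0bd: "\<bar>m x 0\<bar> \<le> S0" if x: "x \<in> {0..1}" for x
  proof -
    have "\<bar>m x 0\<bar> \<le> Am 0 + Amx 0 + 2" unfolding Am_def Amx_def
    proof (rule sup_bound[OF _ csm[OF inFm(1) T0] x])
      fix y :: real assume "y \<in> {0..1}"
      then show "((\<lambda>y. m y 0) has_real_derivative mx y 0) (at y within {0..1})"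
        using D2_dx[OF Dm(1)] inU T0 by blast
    qed
    then show ?thesis using H1m[OF T0] unfolding S0_def M0_def by simp
  qed
  have dm0: "(d (m x 0))\<^sup>2 \<le> D0\<^sup>2" if x: "x \<in> {0..1}" for x
    using d_upper[OF dC dz d1 d2 q db m0bd[OF x]] unfolding D0_def by (rule sq_le_of_abs)
  have Amt_le0: "Amt 0 \<le> 3 * G0\<^sup>2 + 3 * P0\<^sup>2 + 3 * D0\<^sup>2"
  proof -
    note l = I01_lin3[OF gsq cont_LINT(1)[OF sqp[OF inFp(1) T0]], of 3 3 "3 * D0\<^sup>2"]
    have "Amt 0 \<le> I01 (\<lambda>x. 3 * (g x)\<^sup>2 + 3 * (px x 0)\<^sup>2 + 3 * D0\<^sup>2)" unfolding Amt_def
    proof (rule I01_mono'[OF l(1)])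
      show "AE x in lborel. x \<in> {0<..<1} \<longrightarrow> (mt x 0)\<^sup>2 \<le> 3 * (g x)\<^sup>2 + 3 * (px x 0)\<^sup>2 + 3 * D0\<^sup>2"
        using ae2[OF T0]
      proof eventually_elim
        case (elim x)
        show ?case
        proof
          assume x: "x \<in> {0<..<1}"
          then have "mt x 0 = g x - px x 0 - d (m x 0)" using elim by simp
          then have "(mt x 0)\<^sup>2 \<le> 3 * (g x)\<^sup>2 + 3 * (px x 0)\<^sup>2 + 3 * (d (m x 0))\<^sup>2" using sq_diff3 by simp
          moreover have "(d (m x 0))\<^sup>2 \<le> D0\<^sup>2" using dm0 x by simp
          ultimately show "(mt x 0)\<^sup>2 \<le> 3 * (g x)\<^sup>2 + 3 * (px x 0)\<^sup>2 + 3 * D0\<^sup>2" by linarith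
        qed
      qed
    qed simp
    also have "\<dots> = 3 * G0\<^sup>2 + 3 * I01 (\<lambda>x. (px x 0)\<^sup>2) + 3 * D0\<^sup>2" unfolding l(2) IG ..
    finally show ?thesis using Ipx0 by linarith
  qed
  have En0: "En 0 \<le> E0"
    using EnA[OF T0] Apt_le[OF T0] Amt_le0 Imx0 unfolding E0_def by linarith
  have Aptt: "Apt t \<le> E0" and Amtt: "Amt t \<le> E0"
    using Enle[OF t] EnA[OF t] En0 Apt0[of t] Amt0[of t] by linarith+
  have Amxt: "Amx t \<le> 2 * F0\<^sup>2 + 2 * E0" using Amx_le[OF t] Aptt by linarith
  define K' where "K' = I01 (\<lambda>x. \<bar>g x\<bar>) + I01 (\<lambda>x. \<bar>mt x t\<bar>) + \<bar>h0\<bar> + \<bar>h1\<bar> + 1"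
  have absg: "set_integrable lborel {0<..<1} (\<lambda>x. \<bar>g x\<bar>)" by (rule set_integrable_abs[OF L2_L1(1)[OF g]])
  have cmt: "continuous_on {0..1} (\<lambda>x. mt x t)" by (rule csm[OF inFm(2) t])
  have cmtabs: "continuous_on {0..1} (\<lambda>x. \<bar>mt x t\<bar>)" using cmt by (intro continuous_intros)
  have absmt: "set_integrable lborel {0<..<1} (\<lambda>x. \<bar>mt x t\<bar>)" by (rule cont_LINT(1)[OF cmtabs])
  have Ig: "I01 (\<lambda>x. \<bar>g x\<bar>) \<le> 1/2 + 1/2 * G0\<^sup>2" using L2_L1(2)[OF g] unfolding G0_def .
  have Imt: "I01 (\<lambda>x. \<bar>mt x t\<bar>) \<le> 1/2 + 1/2 * E0"
    using I01_abs_bound[OF cont_LINT(1)[OF sqm[OF inFm(2) t]]] Amtt unfolding Amt_def by linarith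
  have Ig0: "I01 (\<lambda>x. \<bar>g x\<bar>) \<ge> 0" by (rule I01_nonneg) simp
  have Imt0: "I01 (\<lambda>x. \<bar>mt x t\<bar>) \<ge> 0" by (rule I01_nonneg) simp
  have K'K: "K' \<le> K" unfolding K'_def K_def H_def using Ig Imt by linarith
  have K'0: "K' \<ge> 0" unfolding K'_def using Ig0 Imt0 by linarith
  have cpx: "continuous_on {0..1} (\<lambda>x. px x t)" by (rule csp[OF inFp(1) t])
  have PX: "I01 (\<lambda>x. px x t) = h1 - h0"
  proof -
    have "((\<lambda>x. px x t) has_integral (p 1 t - p 0 t)) {0..1}"
    proof (rule fundamental_theorem_of_calculus)
      fix x :: real assume "x \<in> {0..1}"
      then have "((\<lambda>y. p y t) has_real_derivative px x t) (at x within {0..1})"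
        using D2_dx[OF Dp(1)] inU t by blast
      then show "((\<lambda>y. p y t) has_vector_derivative px x t) (at x within {0..1})"
        by (simp add: has_real_derivative_iff_has_vector_derivative)
    qed simp
    then have "integral {0..1} (\<lambda>x. px x t) = p 1 t - p 0 t" by (rule integral_unique)
    then show ?thesis using cont_LINT(2)[OF cpx] bc t by simp
  qed
  have intpx: "set_integrable lborel {0<..<1} (\<lambda>x. px x t)" by (rule cont_LINT(1)[OF cpx])
  have int_up: "set_integrable lborel {0<..<1} (\<lambda>x. \<bar>g x\<bar> + \<bar>mt x t\<bar> - K')"
    by (rule set_integral_diff(1)[OF set_integral_add(1)[OF absg absmt] I01_const_int])
  have int_lo: "set_integrable lborel {0<..<1} (\<lambda>x. K' - (\<bar>g x\<bar> + \<bar>mt x t\<bar>))"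
    by (rule set_integral_diff(1)[OF I01_const_int set_integral_add(1)[OF absg absmt]])
  have I_up: "I01 (\<lambda>x. \<bar>g x\<bar> + \<bar>mt x t\<bar> - K') = I01 (\<lambda>x. \<bar>g x\<bar>) + I01 (\<lambda>x. \<bar>mt x t\<bar>) - K'"
    using set_integral_diff(2)[OF set_integral_add(1)[OF absg absmt] I01_const_int]
      set_integral_add(2)[OF absg absmt] I01_const by simp
  have I_lo: "I01 (\<lambda>x. K' - (\<bar>g x\<bar> + \<bar>mt x t\<bar>)) = K' - (I01 (\<lambda>x. \<bar>g x\<bar>) + I01 (\<lambda>x. \<bar>mt x t\<bar>))"
    using set_integral_diff(2)[OF I01_const_int set_integral_add(1)[OF absg absmt]]
      set_integral_add(2)[OF absg absmt] I01_const by simp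
  obtain a where a: "a \<in> {0<..<1}" "d (m a t) \<le> K'"
  proof (rule ccontr)
    assume "\<not> thesis"
    then have h: "\<And>x. x \<in> {0<..<1} \<Longrightarrow> K' < d (m x t)" using that by force
    have "I01 (\<lambda>x. px x t) \<le> I01 (\<lambda>x. \<bar>g x\<bar> + \<bar>mt x t\<bar> - K')"
    proof (rule set_integral_mono_AE[OF intpx int_up])
      show "AE x\<in>{0<..<1} in lborel. px x t \<le> \<bar>g x\<bar> + \<bar>mt x t\<bar> - K'"
        using ae2[OF t]
      proof eventually_elim
        case (elim x)
        show ?case
        proof
          assume x: "x \<in> {0<..<1}"
          then have "px x t = g x - mt x t - d (m x t)" using elim by simp
          then show "px x t \<le> \<bar>g x\<bar> + \<bar>mt x t\<bar> - K'" using h[OF x] by linarith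
        qed
      qed
    qed
    then have "h1 - h0 \<le> I01 (\<lambda>x. \<bar>g x\<bar>) + I01 (\<lambda>x. \<bar>mt x t\<bar>) - K'" unfolding PX I_up .
    then show False unfolding K'_def using abs_ge_self[of h0] abs_ge_minus_self[of h1] by linarith
  qed
  obtain b where b: "b \<in> {0<..<1}" "d (m b t) \<ge> - K'"
  proof (rule ccontr)
    assume "\<not> thesis"
    then have h: "\<And>x. x \<in> {0<..<1} \<Longrightarrow> d (m x t) < - K'" using that by force
    have "I01 (\<lambda>x. K' - (\<bar>g x\<bar> + \<bar>mt x t\<bar>)) \<le> I01 (\<lambda>x. px x t)"
    proof (rule set_integral_mono_AE[OF int_lo intpx])
      show "AE x\<in>{0<..<1} in lborel. K' - (\<bar>g x\<bar> + \<bar>mt x t\<bar>) \<le> px x t"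
        using ae2[OF t]
      proof eventually_elim
        case (elim x)
        show ?case
        proof
          assume x: "x \<in> {0<..<1}"
          then have "px x t = g x - mt x t - d (m x t)" using elim by simp
          then show "K' - (\<bar>g x\<bar> + \<bar>mt x t\<bar>) \<le> px x t" using h[OF x] by linarith
        qed
      qed
    qed
    then have "K' - (I01 (\<lambda>x. \<bar>g x\<bar>) + I01 (\<lambda>x. \<bar>mt x t\<bar>)) \<le> h1 - h0" unfolding PX I_lo .
    then show False unfolding K'_def using abs_ge_self[of h1] abs_ge_minus_self[of h0] by linarith
  qed
  have ma: "m a t \<le> K' / d0"
  proof (cases "m a t \<le> 0")
    case True then show ?thesis using K'0 d0 by (smt (verit) divide_nonneg_pos)
  next
    case False
    then have "d0 * m a t \<le> d (m a t)" using d_lower(1)[OF dC dz dd] by simp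
    then have "d0 * m a t \<le> K'" using a(2) by linarith
    then show ?thesis using d0 by (simp add: pos_le_divide_eq mult.commute)
  qed
  have mb: "m b t \<ge> - (K' / d0)"
  proof (cases "m b t \<ge> 0")
    case True then show ?thesis using K'0 d0 by (smt (verit) divide_nonneg_pos)
  next
    case False
    then have "d (m b t) \<le> d0 * m b t" using d_lower(2)[OF dC dz dd] by simp
    then have "- K' \<le> d0 * m b t" using b(2) by linarith
    then have "- K' \<le> m b t * d0" by (simp add: mult.commute)
    then have "- K' / d0 \<le> m b t" by (subst pos_divide_le_eq[OF d0])
    then show ?thesis by simp
  qed
  have derm: "((\<lambda>y. m y t) has_real_derivative mx y t) (at y within {0..1})" if "y \<in> {0..1}" for y
    using D2_dx[OF Dm(1)] inU t that by blast
  have Imx: "I01 (\<lambda>x. \<bar>mx x t\<bar>) \<le> 1/2 + 1/2 * (2 * F0\<^sup>2 + 2 * E0)"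
  proof -
    have "1/2 * Amx t \<le> 1/2 * (2 * F0\<^sup>2 + 2 * E0)" using Amxt by (intro mult_left_mono) simp_all
    then show ?thesis using I01_abs_bound[OF cont_LINT(1)[OF sqm[OF inFm(1) t]]] unfolding Amx_def by linarith
  qed
  have KK: "K' / d0 \<le> K / d0" using K'K d0 by (simp add: divide_right_mono)
  have mbd: "\<bar>m x t\<bar> \<le> Sm" if x: "x \<in> {0..1}" for x
  proof -
    have o1: "\<bar>m x t - m a t\<bar> \<le> I01 (\<lambda>x. \<bar>mx x t\<bar>)"
      by (rule osc_bound[OF derm csm[OF inFm(1) t] x]) (use a in auto)
    have o2: "\<bar>m x t - m b t\<bar> \<le> I01 (\<lambda>x. \<bar>mx x t\<bar>)"
      by (rule osc_bound[OF derm csm[OF inFm(1) t] x]) (use b in auto)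
    show ?thesis using o1 o2 ma mb Imx KK unfolding Sm_def by linarith
  qed
  have Amt_bd: "Am t \<le> Sm\<^sup>2"
  proof -
    have "Am t \<le> I01 (\<lambda>_. Sm\<^sup>2)" unfolding Am_def
      by (rule I01_mono'[OF I01_const_int], rule AE_I2, use mbd sq_le_of_abs in auto)
    then show ?thesis unfolding I01_const .
  qed
  have N1: "L2norm (\<lambda>x. deriv (\<lambda>s. p x s) t) = sqrt (Apt t)"
  proof -
    have "I01 (\<lambda>x. (deriv (\<lambda>s. p x s) t)\<^sup>2) = Apt t" unfolding Apt_def
      by (rule set_lebesgue_integral_cong) (use dvp inU' t in auto)
    then show ?thesis unfolding L2norm_def by simp
  qed
  have N2: "L2norm (\<lambda>x. deriv (\<lambda>s. m x s) t) = sqrt (Amt t)"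
  proof -
    have "I01 (\<lambda>x. (deriv (\<lambda>s. m x s) t)\<^sup>2) = Amt t" unfolding Amt_def
      by (rule set_lebesgue_integral_cong) (use dvm inU' t in auto)
    then show ?thesis unfolding L2norm_def by simp
  qed
  have N3: "H1norm (\<lambda>x. m x t) = sqrt (Am t + Amx t)"
  proof -
    have "H1norm (\<lambda>x. m x t) \<ge> 0" unfolding H1norm_def by simp
    then show ?thesis using H1m[OF t] by (metis real_sqrt_abs abs_of_nonneg)
  qed
  have "L2norm (\<lambda>x. deriv (\<lambda>s. p x s) t) + L2norm (\<lambda>x. deriv (\<lambda>s. m x s) t) + H1norm (\<lambda>x. m x t)
      \<le> (1 + Apt t) + (1 + Amt t) + (1 + (Am t + Amx t))"
    unfolding N1 N2 N3 using sqrt_le_1plus Apt0 Amt0 Am0 Amx0 by (smt (verit))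
  also have "\<dots> \<le> Cf d0 d1 d2 q F0 G0 H P0 M0"
    unfolding Cf_eq using Aptt Amtt Amt_bd Amxt by linarith
  finally show ?thesis unfolding F0_def G0_def H_def P0_def M0_def .
qed
theorem lemma2:
  fixes d :: "real \<Rightarrow> real" and d0 d1 d2 q :: real
  assumes "d C1_differentiable_on UNIV"
    and "d 0 = 0"
    and "d0 > 0" and "d1 \<ge> 0" and "d2 \<ge> 0" and "q \<ge> 0"
    and "\<forall>y. deriv d y > d0"
    and "\<forall>y. y \<noteq> 0 \<longrightarrow> \<bar>deriv d y\<bar> \<le> d1 + d2 * \<bar>y\<bar> powr q"
  shows "\<exists>C :: real \<Rightarrow> real \<Rightarrow> real \<Rightarrow> real \<Rightarrow> real \<Rightarrow> real.
    \<forall>(f :: real \<Rightarrow> real) (g :: real \<Rightarrow> real) (h0 :: real) (h1 :: real) (T :: real)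
      (p :: real \<Rightarrow> real \<Rightarrow> real) (m :: real \<Rightarrow> real \<Rightarrow> real).
      in_L2 f \<and> in_L2 g \<and> T > 0
      \<and> (\<exists>U. open U \<and> {0..1} \<times> {0..T} \<subseteq> U \<and> smooth_on2 U p \<and> smooth_on2 U m)
      \<and> (\<forall>t\<in>{0..T}. AE x in lborel. x \<in> {0<..<1} \<longrightarrow>
            deriv (\<lambda>s. p x s) t + deriv (\<lambda>y. m y t) x = f x)
      \<and> (\<forall>t\<in>{0..T}. AE x in lborel. x \<in> {0<..<1} \<longrightarrow>
            deriv (\<lambda>s. m x s) t + deriv (\<lambda>y. p y t) x + d (m x t) = g x)
      \<and> (\<forall>t\<in>{0..T}. p 0 t = h0 \<and> p 1 t = h1)
      \<longrightarrow> (\<forall>t\<in>{0..T}.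
            L2norm (\<lambda>x. deriv (\<lambda>s. p x s) t) + L2norm (\<lambda>x. deriv (\<lambda>s. m x s) t)
              + H1norm (\<lambda>x. m x t)
            \<le> C (L2norm f) (L2norm g) (\<bar>h0\<bar> + \<bar>h1\<bar>) (H1norm (\<lambda>x. p x 0)) (H1norm (\<lambda>x. m x 0)))"
proof -
  show ?thesis
  proof (rule exI[where x="\<lambda>F G H P0 M0. Cf d0 d1 d2 q F G H P0 M0"], intro allI impI ballI)
    fix f g h0 h1 T p m t
    assume h: "in_L2 f \<and> in_L2 g \<and> T > 0
      \<and> (\<exists>U. open U \<and> {0..1} \<times> {0..T} \<subseteq> U \<and> smooth_on2 U p \<and> smooth_on2 U m)
      \<and> (\<forall>t\<in>{0..T}. AE x in lborel. x \<in> {0<..<1} \<longrightarrow>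
            deriv (\<lambda>s. p x s) t + deriv (\<lambda>y. m y t) x = f x)
      \<and> (\<forall>t\<in>{0..T}. AE x in lborel. x \<in> {0<..<1} \<longrightarrow>
            deriv (\<lambda>s. m x s) t + deriv (\<lambda>y. p y t) x + d (m x t) = g x)
      \<and> (\<forall>t\<in>{0..T}. p 0 t = h0 \<and> p 1 t = h1)"
      and t: "t \<in> {0..T}"
    then obtain U where U: "open U" "{0..1} \<times> {0..T} \<subseteq> U" "smooth_on2 U p" "smooth_on2 U m" by blast
    show "L2norm (\<lambda>x. deriv (\<lambda>s. p x s) t) + L2norm (\<lambda>x. deriv (\<lambda>s. m x s) t)
              + H1norm (\<lambda>x. m x t)
            \<le> Cf d0 d1 d2 q (L2norm f) (L2norm g) (\<bar>h0\<bar> + \<bar>h1\<bar>) (H1norm (\<lambda>x. p x 0)) (H1norm (\<lambda>x. m x 0))"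
      by (rule main[OF assms _ _ _ U]) (use h t in auto)
  qed
qed

end
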